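(* Let $n$ be a power of $2$ and let $A\subseteq\{0,1\}^{\log n}$ be arbitrary. For every $\epsilon>0$, the property $P_A=\{x\in\{0,1\}^n:\exists y\in A,\ x=h(y)\}$ has a quantum property tester with distance parameter $\epsilon$ that makes $O(1/\epsilon)$ queries (the constant independent of $n$ and $A$) and has one-sided error.
   Context: Logarithms are base 2. Positions $i\in\{1,\dots,n\}$ of a string of length $n$ are identified with vectors in $\mathbb{F}_2^{\log n}$. The Hadamard code of $y\in\{0,1\}^{\log n}$ is $h(y)\in\{0,1\}^n$ with $h(y)_i=y\cdot i$ (inner product over $\mathbb{F}_2$). For $P\subseteq\{0,1\}^n$, $x$ is $\epsilon$-far from $P$ if it differs from every $y\in P$ in more than $\epsilon n$ positions. A quantum property tester for $P$ with distance parameter $\epsilon$ is a quantum algorithm with oracle $O_x:\lvert i,b,z\rangle\mapsto\lvert i,b\oplus x_i,z\rangle$ that accepts every $x\in P$ with probability at least $2/3$ and every $x$ that is $\epsilon$-far from $P$ with probability at most $1/3$; one-sided error means every $x\in P$ is accepted with probability $1$. Complexity is the number of oracle queries. *)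

theory Defs
  imports Complex_Main
begin

text \<open>Bit strings of length n are functions nat \<Rightarrow> bool; only positions 0..n-1 matter.
  Vectors in F_2^k are encoded as naturals below 2^k (bit j = coordinate j).\<close>

definition ip2 :: "nat \<Rightarrow> nat \<Rightarrow> nat \<Rightarrow> bool" where
  "ip2 k y i = odd (card {j. j < k \<and> bit y j \<and> bit i j})"

definition hadamard :: "nat \<Rightarrow> nat \<Rightarrow> (nat \<Rightarrow> bool)" where
  "hadamard k y = (\<lambda>i. ip2 k y i)"

definition P_A :: "nat \<Rightarrow> nat set \<Rightarrow> (nat \<Rightarrow> bool) set" where
  "P_A k A = {x. \<exists>y\<in>A. \<forall>i<2^k. x i = hadamard k y i}"

definition hdist :: "nat \<Rightarrow> (nat \<Rightarrow> bool) \<Rightarrow> (nat \<Rightarrow> bool) \<Rightarrow> nat" where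
  "hdist n x y = card {i. i < n \<and> x i \<noteq> y i}"

definition eps_far :: "nat \<Rightarrow> real \<Rightarrow> (nat \<Rightarrow> bool) set \<Rightarrow> (nat \<Rightarrow> bool) \<Rightarrow> bool" where
  "eps_far n \<epsilon> P x = (\<forall>y\<in>P. real (hdist n x y) > \<epsilon> * real n)"

text \<open>The Hilbert space has orthonormal basis |i,b,z\<rangle>
  with i < n, b \<in> {0,1}, z < W (workspace), encoded as the index (2*i + b)*W + z < 2*n*W.
  Matrices are functions nat \<Rightarrow> nat \<Rightarrow> complex, meaningful on indices below D = 2*n*W.\<close>

type_synonym cmatrix = "nat \<Rightarrow> nat \<Rightarrow> complex"
type_synonym cvector = "nat \<Rightarrow> complex"

definition unitary_mat :: "nat \<Rightarrow> cmatrix \<Rightarrow> bool" where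
  "unitary_mat D U = (\<forall>r<D. \<forall>c<D.
     (\<Sum>m<D. cnj (U m r) * U m c) = (if r = c then 1 else 0))"

definition mat_app :: "nat \<Rightarrow> cmatrix \<Rightarrow> cvector \<Rightarrow> cvector" where
  "mat_app D M v = (\<lambda>r. if r < D then (\<Sum>c<D. M r c * v c) else 0)"

definition basis_idx :: "nat \<Rightarrow> nat \<Rightarrow> bool \<Rightarrow> nat \<Rightarrow> nat" where
  "basis_idx W i b z = (2 * i + (if b then 1 else 0)) * W + z"

text \<open>The oracle O_x : |i,b,z\<rangle> \<mapsto> |i, b xor x_i, z\<rangle> as a permutation matrix.\<close>
definition oracle_target :: "nat \<Rightarrow> (nat \<Rightarrow> bool) \<Rightarrow> nat \<Rightarrow> nat" where
  "oracle_target W x c =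
     (let z = c mod W; b = odd (c div W); i = c div W div 2
      in basis_idx W i (b \<noteq> x i) z)"

definition oracle_mat :: "nat \<Rightarrow> (nat \<Rightarrow> bool) \<Rightarrow> cmatrix" where
  "oracle_mat W x = (\<lambda>r c. if r = oracle_target W x c then 1 else 0)"

text \<open>Algorithm: U_0, then (O_x, U_1), ..., (O_x, U_T); T = length Us queries.
  Start state |0\<rangle>; final measurement in the computational basis, accept iff the
  outcome is in Acc.\<close>
definition final_state :: "nat \<Rightarrow> nat \<Rightarrow> (nat \<Rightarrow> bool) \<Rightarrow> cmatrix \<Rightarrow> cmatrix list \<Rightarrow> cvector" where
  "final_state n W x U0 Us =
     (let D = 2 * n * W
      in foldl (\<lambda>v U. mat_app D U (mat_app D (oracle_mat W x) v))
               (mat_app D U0 (\<lambda>r. if r = 0 then 1 else 0)) Us)"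

definition accept_prob :: "nat \<Rightarrow> nat \<Rightarrow> (nat \<Rightarrow> bool) \<Rightarrow> cmatrix \<Rightarrow> cmatrix list \<Rightarrow> nat set \<Rightarrow> real" where
  "accept_prob n W x U0 Us Acc = (\<Sum>r\<in>Acc. (cmod (final_state n W x U0 Us r))^2)"

definition one_sided_quantum_tester :: "nat \<Rightarrow> (nat \<Rightarrow> bool) set \<Rightarrow> real \<Rightarrow> nat \<Rightarrow> bool" where
  "one_sided_quantum_tester n P \<epsilon> T =
     (\<exists>W U0 Us Acc. W > 0 \<and> length Us = T \<and>
        unitary_mat (2 * n * W) U0 \<and> (\<forall>U\<in>set Us. unitary_mat (2 * n * W) U) \<and>
        Acc \<subseteq> {..<2 * n * W} \<and>
        (\<forall>x\<in>P. accept_prob n W x U0 Us Acc = 1) \<and>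
        (\<forall>x. eps_far n \<epsilon> P x \<longrightarrow> accept_prob n W x U0 Us Acc \<le> 1/3))"

end

theory Submission
  imports Defs
begin

lemma bit_add_pow_low:
  fixes i :: nat assumes "i < 2^k"
  shows "bit (i + 2^k) j = (if j = k then True else bit i j)"
proof -
  have dis: "\<And>q. \<not> bit i q \<or> \<not> bit ((2::nat)^k) q"
  proof -
    fix q show "\<not> bit i q \<or> \<not> bit ((2::nat)^k) q"
    proof (cases "q = k")
      case True
      have "i div 2^k = 0" using assms by simp
      then show ?thesis using True by (simp add: bit_nat_def)
    next
      case False then show ?thesis by (simp add: bit_exp_iff)
    qed
  qed
  have "bit (i + 2^k) j = (bit i j \<or> bit ((2::nat)^k) j)"
    by (rule bit_disjunctive_add_iff) (use dis in auto)
  moreover have "bit i k = False"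
  proof -
    have "i div 2^k = 0" using assms by simp
    then show ?thesis by (simp add: bit_nat_def)
  qed
  ultimately show ?thesis by (auto simp add: bit_exp_iff)
qed

lemma bit_less_pow: "(s::nat) < 2^k \<Longrightarrow> k \<le> j \<Longrightarrow> \<not> bit s j"
proof -
  assume "s < 2^k" "k \<le> j"
  then have "s < 2^j" by (meson order_less_le_trans one_le_numeral power_increasing)
  then have "s div 2^j = 0" by simp
  then show ?thesis by (simp add: bit_nat_def)
qed

lemma ip2_Suc: "ip2 (Suc k) y i = (ip2 k y i \<noteq> (bit y k \<and> bit i k))"
proof -
  have e: "{j. j < Suc k \<and> bit y j \<and> bit i j} = {j. j < k \<and> bit y j \<and> bit i j} \<union> (if bit y k \<and> bit i k then {k} else {})"
    by (auto simp: less_Suc_eq)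
  show ?thesis unfolding ip2_def e by (auto simp: card_insert_if)
qed

lemma ip2_add_pow: "(i::nat) < 2^k \<Longrightarrow> ip2 k y (i + 2^k) = ip2 k y i"
  unfolding ip2_def by (simp add: bit_add_pow_low cong: conj_cong)

lemma ip2_sym: "ip2 k y i = ip2 k i y"
  unfolding ip2_def by (simp add: conj_commute)

definition chi :: "nat \<Rightarrow> nat \<Rightarrow> nat \<Rightarrow> real" where
  "chi k s t = (if ip2 k s t then -1 else 1)"

lemma sum_lessThan_add_nat: "(\<Sum>t<a+b. f t) = (\<Sum>t<a. f t) + (\<Sum>t<b. f (a + t :: nat))"
  by (induction b) (auto simp: add.commute add.left_commute)

lemma chi_sq: "chi k s t * chi k s t = 1" by (simp add: chi_def)

lemma char_sum:
  "(\<Sum>t<2^k. chi k s t * chi k s' t) = (if (\<forall>j<k. bit s j = bit s' j) then 2^k else 0)"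
proof (induction k)
  case 0
  then show ?case by (simp add: chi_def ip2_def)
next
  case (Suc k)
  have lo: "\<And>t. t < 2^k \<Longrightarrow> chi (Suc k) s t * chi (Suc k) s' t = chi k s t * chi k s' t"
    using bit_less_pow[of _ k k] by (simp add: chi_def ip2_Suc)
  have hi: "\<And>t. t < 2^k \<Longrightarrow> chi (Suc k) s (2^k + t) * chi (Suc k) s' (2^k + t)
       = chi k s t * chi k s' t * (if bit s k = bit s' k then 1 else -1)"
    by (simp add: chi_def ip2_Suc add.commute[of "2^k"] ip2_add_pow bit_add_pow_low)
  have "(\<Sum>t<2^Suc k. chi (Suc k) s t * chi (Suc k) s' t)
      = (\<Sum>t<2^k. chi k s t * chi k s' t) + (\<Sum>t<2^k. chi k s t * chi k s' t) * (if bit s k = bit s' k then 1 else -1)"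
    using sum_lessThan_add_nat[where a="2^k" and b="2^k" and f="\<lambda>t. chi (Suc k) s t * chi (Suc k) s' t"]
    by (simp add: lo hi sum_distrib_right mult_2)
  also have "\<dots> = (if (\<forall>j<Suc k. bit s j = bit s' j) then 2^Suc k else 0)"
    unfolding Suc.IH by (auto simp: less_Suc_eq)
  finally show ?case .
qed

lemma char_orth:
  assumes "s < 2^k" "s' < 2^k"
  shows "(\<Sum>t<2^k. chi k s t * chi k s' t) = (if s = s' then 2^k else 0)"
proof -
  have "(\<forall>j<k. bit s j = bit s' j) = (s = s')"
  proof
    assume h: "\<forall>j<k. bit s j = bit s' j"
    show "s = s'"
    proof (rule bit_eqI)
      fix j show "bit s j = bit s' j"
        using h bit_less_pow[OF assms(1)] bit_less_pow[OF assms(2)] by (cases "j < k") auto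
    qed
  qed auto
  then show ?thesis by (simp add: char_sum)
qed


definition sv :: "'l set \<Rightarrow> ('l \<Rightarrow> 'a::comm_monoid_add) \<Rightarrow> ('l \<Rightarrow> nat) \<Rightarrow> nat \<Rightarrow> 'a" where
  "sv L a p = (\<lambda>r. \<Sum>l\<in>L. if p l = r then a l else 0)"

lemma sv_at: "finite L \<Longrightarrow> inj_on p L \<Longrightarrow> l \<in> L \<Longrightarrow> sv L a p (p l) = a l"
proof -
  assume a: "finite L" "inj_on p L" "l \<in> L"
  have "sv L a p (p l) = (\<Sum>la\<in>L. if la = l then a la else 0)"
    unfolding sv_def by (rule sum.cong) (use a in \<open>auto simp: inj_on_def\<close>)
  then show ?thesis using a by simp
qed

lemma sv_out: "r \<notin> p ` L \<Longrightarrow> sv L a p r = 0"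
  unfolding sv_def by (auto intro!: sum.neutral)

lemma sv_cong: "(\<And>l. l \<in> L \<Longrightarrow> a l = a' l) \<Longrightarrow> (\<And>l. l \<in> L \<Longrightarrow> p l = p' l) \<Longrightarrow> sv L a p = sv L a' p'"
  unfolding sv_def by (auto intro!: sum.cong)

lemma sum_sv:
  assumes "finite L" "inj_on p L" "p ` L \<subseteq> S" "finite S" "g 0 = 0"
  shows "(\<Sum>r\<in>S. g (sv L a p r)) = (\<Sum>l\<in>L. g (a l))"
proof -
  have "(\<Sum>r\<in>S. g (sv L a p r)) = (\<Sum>r\<in>p ` L. g (sv L a p r))"
    by (rule sum.mono_neutral_right) (use assms in \<open>auto simp: sv_out\<close>)
  also have "\<dots> = (\<Sum>l\<in>L. g (sv L a p (p l)))"
    by (rule sum.reindex[OF assms(2), unfolded comp_def])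
  also have "\<dots> = (\<Sum>l\<in>L. g (a l))"
    using assms by (auto intro!: sum.cong simp: sv_at)
  finally show ?thesis .
qed

lemma mat_app_sv:
  assumes "finite L" "\<And>l. l \<in> L \<Longrightarrow> p l < D"
  shows "mat_app D M (sv L a p) = (\<lambda>r. if r < D then (\<Sum>l\<in>L. a l * M r (p l)) else 0)"
proof (rule ext)
  fix r
  have "(\<Sum>c<D. M r c * sv L a p c) = (\<Sum>l\<in>L. a l * M r (p l))"
  proof -
    have "(\<Sum>c<D. M r c * sv L a p c) = (\<Sum>c<D. \<Sum>l\<in>L. if p l = c then a l * M r c else 0)"
      unfolding sv_def by (auto simp: sum_distrib_left intro!: sum.cong)
    also have "\<dots> = (\<Sum>l\<in>L. \<Sum>c<D. if p l = c then a l * M r c else 0)"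
      by (rule sum.swap)
    also have "\<dots> = (\<Sum>l\<in>L. a l * M r (p l))"
      using assms(2) by (auto intro!: sum.cong)
    finally show ?thesis .
  qed
  then show "mat_app D M (sv L a p) r = (if r < D then (\<Sum>l\<in>L. a l * M r (p l)) else 0)"
    unfolding mat_app_def by simp
qed

definition pmat :: "(nat \<Rightarrow> nat) \<Rightarrow> (nat \<Rightarrow> complex) \<Rightarrow> cmatrix" where
  "pmat f \<sigma> = (\<lambda>r c. if r = f c then \<sigma> c else 0)"

lemma mat_app_pmat_sv:
  assumes "finite L" "\<And>l. l \<in> L \<Longrightarrow> p l < D" "\<And>l. l \<in> L \<Longrightarrow> f (p l) < D"
  shows "mat_app D (pmat f \<sigma>) (sv L a p) = sv L (\<lambda>l. \<sigma> (p l) * a l) (\<lambda>l. f (p l))"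
proof (rule ext)
  fix r
  show "mat_app D (pmat f \<sigma>) (sv L a p) r = sv L (\<lambda>l. \<sigma> (p l) * a l) (\<lambda>l. f (p l)) r"
  proof (cases "r < D")
    case True
    have "mat_app D (pmat f \<sigma>) (sv L a p) r = (\<Sum>l\<in>L. a l * pmat f \<sigma> r (p l))"
      using True by (simp add: mat_app_sv[OF assms(1,2)])
    then show ?thesis
      by (simp add: sv_def pmat_def) (auto intro!: sum.cong simp: mult.commute)
  next
    case False
    then have "sv L (\<lambda>l. \<sigma> (p l) * a l) (\<lambda>l. f (p l)) r = 0"
      using assms(3) by (intro sv_out) force
    then show ?thesis using False by (simp add: mat_app_def)
  qed
qed

lemma unitary_pmat:
  assumes "bij_betw f {..<D} {..<D}" "\<And>c. c < D \<Longrightarrow> cnj (\<sigma> c) * \<sigma> c = 1"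
  shows "unitary_mat D (pmat f \<sigma>)"
  unfolding unitary_mat_def
proof (intro allI impI)
  fix r c assume r: "r < D" and c: "c < D"
  have fr: "f r < D" using assms(1) r by (auto simp: bij_betw_def)
  have "(\<Sum>m<D. cnj (pmat f \<sigma> m r) * pmat f \<sigma> m c) = (\<Sum>m<D. if m = f r then (if f r = f c then cnj (\<sigma> r) * \<sigma> c else 0) else 0)"
    by (rule sum.cong) (auto simp: pmat_def)
  also have "\<dots> = (if f r = f c then cnj (\<sigma> r) * \<sigma> c else 0)"
    using fr by simp
  also have "\<dots> = (if r = c then 1 else 0)"
    using assms r c by (auto simp: bij_betw_def inj_on_def)
  finally show "(\<Sum>m<D. cnj (pmat f \<sigma> m r) * pmat f \<sigma> m c) = (if r = c then 1 else 0)" .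
qed

lemma extend_bij:
  fixes D :: nat and p p' :: "'r \<Rightarrow> nat"
  assumes "inj_on p R" "inj_on p' R" "p ` R \<subseteq> {..<D}" "p' ` R \<subseteq> {..<D}"
  shows "\<exists>f. bij_betw f {..<D} {..<D} \<and> (\<forall>x\<in>R. f (p x) = p' x)"
proof -
  define S where "S = p ` R"
  define g where "g = (\<lambda>c. p' (inv_into R p c))"
  have gp: "\<And>x. x \<in> R \<Longrightarrow> g (p x) = p' x" unfolding g_def using assms(1) by simp
  have gS: "g ` S = p' ` R" unfolding S_def using gp by (force simp: image_image)
  have bg: "bij_betw g S (g ` S)"
    unfolding bij_betw_def S_def
  proof
    show "inj_on g (p ` R)"
      using assms(2) inv_into_f_f[OF assms(1)] unfolding inj_on_def g_def by auto
  qed simp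
  have fin1: "finite S" using assms(3) unfolding S_def by (metis finite_lessThan finite_subset)
  have fin2: "finite (g ` S)" using assms(4) gS by (metis finite_lessThan finite_subset)
  note fin = fin1 fin2
  have sub: "S \<subseteq> {..<D}" "g ` S \<subseteq> {..<D}" using assms gS S_def by auto
  have "card ({..<D} - S) = card ({..<D} - g ` S)"
    using sub fin bij_betw_same_card[OF bg] by (simp add: card_Diff_subset)
  then obtain h where h: "bij_betw h ({..<D} - S) ({..<D} - g ` S)"
    using finite_same_card_bij by blast
  define f where "f = (\<lambda>c. if c \<in> S then g c else h c)"
  have "bij_betw f (S \<union> ({..<D} - S)) (g ` S \<union> ({..<D} - g ` S))"
  proof (rule bij_betw_combine)
    show "bij_betw f S (g ` S)" using bg by (rule bij_betw_cong[THEN iffD1, rotated]) (simp add: f_def)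
    show "bij_betw f ({..<D} - S) ({..<D} - g ` S)" using h by (rule bij_betw_cong[THEN iffD1, rotated]) (simp add: f_def)
  qed auto
  moreover have "S \<union> ({..<D} - S) = {..<D}" "g ` S \<union> ({..<D} - g ` S) = {..<D}" using sub by auto
  ultimately have "bij_betw f {..<D} {..<D}" by simp
  moreover have "\<forall>x\<in>R. f (p x) = p' x" using gp by (auto simp: f_def S_def)
  ultimately show ?thesis by blast
qed


lemma unitary_real:
  assumes "\<And>r c. r < D \<Longrightarrow> c < D \<Longrightarrow> (\<Sum>m<D. V m r * V m c) = (if r = c then 1 else 0)"
  shows "unitary_mat D (\<lambda>r c. complex_of_real (V r c))"
  unfolding unitary_mat_def
proof (intro allI impI)
  fix r c assume "r < D" "c < D"
  have "(\<Sum>m<D. cnj (complex_of_real (V m r)) * complex_of_real (V m c)) = complex_of_real (\<Sum>m<D. V m r * V m c)"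
    by simp
  also have "\<dots> = (if r = c then 1 else 0)" using assms \<open>r < D\<close> \<open>c < D\<close> by simp
  finally show "(\<Sum>m<D. cnj (complex_of_real (V m r)) * complex_of_real (V m c)) = (if r = c then 1 else 0)" .
qed

lemma householder:
  fixes \<psi> :: "nat \<Rightarrow> real"
  assumes D: "0 < D" and norm: "(\<Sum>r<D. (\<psi> r)^2) = 1"
  shows "\<exists>U. unitary_mat D U \<and> (\<forall>r<D. U r 0 = complex_of_real (\<psi> r))"
proof (cases "\<psi> 0 = 1")
  case True
  have split: "(\<Sum>r<D. (\<psi> r)^2) = (\<psi> 0)^2 + (\<Sum>r\<in>{..<D} - {0}. (\<psi> r)^2)"
    using D by (subst sum.remove[of _ 0]) auto
  have "(\<Sum>r\<in>{..<D} - {0}. (\<psi> r)^2) = 0" using split norm True by simp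
  then have z: "\<forall>r\<in>{..<D} - {0}. (\<psi> r)^2 = 0"
    by (subst sum_nonneg_eq_0_iff[symmetric]) auto
  define V where "V = (\<lambda>r c::nat. if r = c then (1::real) else 0)"
  have "unitary_mat D (\<lambda>r c. complex_of_real (V r c))"
  proof (rule unitary_real)
    fix r c assume r: "r < D" and c: "c < D"
    have "(\<Sum>m<D. V m r * V m c) = (\<Sum>m<D. if m = r then (if r = c then 1 else 0) else 0)"
      by (rule sum.cong) (auto simp: V_def)
    then show "(\<Sum>m<D. V m r * V m c) = (if r = c then 1 else 0)" using r by simp
  qed
  moreover have "\<forall>r<D. complex_of_real (V r 0) = complex_of_real (\<psi> r)"
    using z True by (auto simp: V_def)
  ultimately show ?thesis by blast
next
  case False
  define w where "w = (\<lambda>r. (if r = 0 then 1 else 0) - \<psi> r)"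
  define N where "N = (\<Sum>r<D. (w r)^2)"
  have p0le: "(\<psi> 0)^2 \<le> 1"
  proof -
    have "(\<psi> 0)^2 \<le> (\<Sum>r<D. (\<psi> r)^2)"
      using D by (intro member_le_sum) auto
    then show ?thesis using norm by simp
  qed
  then have "\<bar>\<psi> 0\<bar> \<le> 1" using abs_square_le_1 by blast
  then have "\<psi> 0 \<le> 1" by linarith
  then have p0: "\<psi> 0 < 1" using False by simp
  have N: "N = 2 - 2 * \<psi> 0"
  proof -
    have "N = (w 0)^2 + (\<Sum>r\<in>{..<D} - {0}. (w r)^2)"
      unfolding N_def using D by (subst sum.remove[of _ 0]) auto
    also have "(\<Sum>r\<in>{..<D} - {0}. (w r)^2) = (\<Sum>r\<in>{..<D} - {0}. (\<psi> r)^2)"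
      by (rule sum.cong) (auto simp: w_def)
    also have "(\<Sum>r\<in>{..<D} - {0}. (\<psi> r)^2) = 1 - (\<psi> 0)^2"
      using norm D by (subst (asm) sum.remove[of _ 0]) auto
    finally show ?thesis by (simp add: w_def power2_eq_square algebra_simps)
  qed
  then have Npos: "N > 0" using p0 by simp
  define V where "V = (\<lambda>r c::nat. (if r = c then (1::real) else 0) - 2 * w r * w c / N)"
  have "unitary_mat D (\<lambda>r c. complex_of_real (V r c))"
  proof (rule unitary_real)
    fix r c assume r: "r < D" and c: "c < D"
    define a where "a = 2 * w r / N"
    define b where "b = 2 * w c / N"
    have "(\<Sum>m<D. V m r * V m c) = (\<Sum>m<D. ((if m = r then (if r = c then 1 else 0) else 0)
        - (if m = r then b * w r else 0)) - ((if m = c then a * w c else 0)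
        - (a * b) * (w m)^2))"
      unfolding V_def a_def b_def by (rule sum.cong) (auto simp: power2_eq_square algebra_simps)
    also have "\<dots> = (((if r = c then 1 else 0) - b * w r) - (a * w c - (a * b) * N))"
      using r c unfolding N_def
      by (simp only: sum_subtractf sum_distrib_left[symmetric]) simp
    also have "\<dots> = (if r = c then 1 else 0)"
      using Npos unfolding a_def b_def by (simp add: power2_eq_square field_simps)
    finally show "(\<Sum>m<D. V m r * V m c) = (if r = c then 1 else 0)" .
  qed
  moreover have "\<forall>r<D. complex_of_real (V r 0) = complex_of_real (\<psi> r)"
  proof (intro allI impI)
    fix r assume "r < D"
    have "w 0 = 1 - \<psi> 0" by (simp add: w_def)
    then have "V r 0 = (if r = 0 then 1 else 0) - w r"
      unfolding V_def using Npos N by (simp add: field_simps)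
    then show "complex_of_real (V r 0) = complex_of_real (\<psi> r)" by (simp add: w_def)
  qed
  ultimately show ?thesis by blast
qed

lemma sum_lessThan_mult_nat:
  "(\<Sum>m<n * q. f m) = (\<Sum>s<n. \<Sum>u<q. f (s * q + u :: nat))"
proof (induction n)
  case 0 then show ?case by simp
next
  case (Suc n)
  have "(\<Sum>m<Suc n * q. f m) = (\<Sum>m<n * q + q. f m)" by (simp add: add.commute)
  also have "\<dots> = (\<Sum>m<n * q. f m) + (\<Sum>u<q. f (n * q + u))"
    by (rule sum_lessThan_add_nat)
  finally show ?case using Suc by simp
qed

definition kron :: "nat \<Rightarrow> cmatrix \<Rightarrow> cmatrix" where
  "kron q H = (\<lambda>r c. if r mod q = c mod q then H (r div q) (c div q) else 0)"

lemma unitary_kron: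
  assumes H: "unitary_mat n H" and q: "0 < q"
  shows "unitary_mat (n * q) (kron q H)"
  unfolding unitary_mat_def
proof (intro allI impI)
  fix r c assume r: "r < n * q" and c: "c < n * q"
  have rd: "r div q < n" "c div q < n" using r c q by (auto simp: div_less_iff_less_mult mult.commute)
  have eq: "(r mod q = c mod q \<and> r div q = c div q) = (r = c)" by (metis div_mult_mod_eq)
  have "(\<Sum>m<n * q. cnj (kron q H m r) * kron q H m c)
      = (\<Sum>s<n. \<Sum>u<q. cnj (kron q H (s * q + u) r) * kron q H (s * q + u) c)"
    by (rule sum_lessThan_mult_nat)
  also have "\<dots> = (\<Sum>s<n. \<Sum>u<q. if u = r mod q then (if r mod q = c mod q then cnj (H s (r div q)) * H s (c div q) else 0) else 0)"
    by (intro sum.cong refl) (auto simp: kron_def)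
  also have "\<dots> = (\<Sum>s<n. if r mod q = c mod q then cnj (H s (r div q)) * H s (c div q) else 0)"
    using q by simp
  also have "\<dots> = (if r mod q = c mod q then (\<Sum>s<n. cnj (H s (r div q)) * H s (c div q)) else 0)"
    by simp
  also have "\<dots> = (if r = c then 1 else 0)"
  proof -
    have "(\<Sum>s<n. cnj (H s (r div q)) * H s (c div q)) = (if r div q = c div q then 1 else 0)"
      using H rd unfolding unitary_mat_def by blast
    then show ?thesis using eq by auto
  qed
  finally show "(\<Sum>m<n * q. cnj (kron q H m r) * kron q H m c) = (if r = c then 1 else 0)" .
qed


fun enc :: "nat \<Rightarrow> nat list \<Rightarrow> nat" where
  "enc B [] = 0" | "enc B (a # as) = a + B * enc B as"

lemma enc_bound: "(\<forall>e\<in>set xs. e < B) \<Longrightarrow> enc B xs < B ^ length xs"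
proof (induction xs)
  case Nil then show ?case by simp
next
  case (Cons a xs)
  then have "enc B xs + 1 \<le> B ^ length xs" "a < B" by auto
  then have "B * (enc B xs + 1) \<le> B * B ^ length xs" using mult_le_mono2 by blast
  then have "a + B * enc B xs < B * B ^ length xs" using \<open>a < B\<close> by (simp add: algebra_simps)
  then show ?case by simp
qed

lemma enc_inj: "length xs = length ys \<Longrightarrow> (\<forall>e\<in>set xs. e < B) \<Longrightarrow> (\<forall>e\<in>set ys. e < B) \<Longrightarrow> enc B xs = enc B ys \<Longrightarrow> xs = ys"
proof (induction xs arbitrary: ys)
  case Nil then show ?case by simp
next
  case (Cons a xs)
  then obtain b ys' where ys: "ys = b # ys'" by (cases ys) auto
  have ab: "a < B" "b < B" using Cons.prems ys by auto
  have e: "a + B * enc B xs = b + B * enc B ys'" using Cons.prems ys by simp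
  have "(a + B * enc B xs) mod B = (b + B * enc B ys') mod B" using e by simp
  then have "a = b" using ab by simp
  moreover have "enc B xs = enc B ys'" using e \<open>a = b\<close> ab by simp
  then have "xs = ys'" using Cons ys by auto
  ultimately show ?case using ys by simp
qed

lemma basis_idx_inj:
  assumes "z < W" "z' < W" "basis_idx W i b z = basis_idx W i' b' z'"
  shows "i = i' \<and> b = b' \<and> z = z'"
proof -
  have W: "0 < W" using assms by simp
  have "basis_idx W i b z mod W = z" "basis_idx W i' b' z' mod W = z'" using assms(1,2)
    by (simp_all add: basis_idx_def)
  then have z: "z = z'" using assms(3) by simp
  have "basis_idx W i b z div W = 2 * i + of_bool b" "basis_idx W i' b' z' div W = 2 * i' + of_bool b'"
    using assms(1,2) by (simp_all add: basis_idx_def)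
  then have "2 * i + of_bool b = 2 * i' + (of_bool b' :: nat)" using assms(3) by simp
  then have "i = i' \<and> b = b'" by (cases b; cases b'; simp; presburger)
  then show ?thesis using z by simp
qed

lemma oracle_target_idx:
  assumes "z < W"
  shows "oracle_target W x (basis_idx W i b z) = basis_idx W i (b \<noteq> x i) z"
proof -
  have W: "0 < W" using assms by simp
  have m: "basis_idx W i b z mod W = z" using assms by (simp add: basis_idx_def)
  have d: "basis_idx W i b z div W = 2 * i + of_bool b" using assms by (simp add: basis_idx_def)
  have "odd (2 * i + of_bool b :: nat) = b" by (cases b) auto
  moreover have "(2 * i + of_bool b :: nat) div 2 = i" by (cases b) auto
  ultimately show ?thesis unfolding oracle_target_def Let_def m d by simp
qed

lemma basis_idx_False_div_mod:
  assumes "z < W"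
  shows "basis_idx W i False z mod (2 * W) = z" "basis_idx W i False z div (2 * W) = i"
proof -
  have e: "basis_idx W i False z = z + (2 * W) * i" by (simp add: basis_idx_def algebra_simps)
  show "basis_idx W i False z mod (2 * W) = z" "basis_idx W i False z div (2 * W) = i"
    unfolding e using assms by simp_all
qed

lemma basis_idx_bound:
  assumes "i < n" "z < W"
  shows "basis_idx W i b z < 2 * n * W"
proof -
  have "basis_idx W i b z < (2 * i + of_bool b) * W + W" using assms(2) by (simp add: basis_idx_def)
  also have "\<dots> = (2 * i + of_bool b + 1) * W" by (simp add: algebra_simps)
  also have "\<dots> \<le> (2 * n) * W" using assms(1) by (intro mult_right_mono) (cases b, auto)
  finally show ?thesis by simp
qed

lemma oracle_mat_pmat: "oracle_mat W x = pmat (oracle_target W x) (\<lambda>_. 1)"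
  by (simp add: oracle_mat_def pmat_def fun_eq_iff)


locale qt =
  fixes k m :: nat
  assumes m_pos: "0 < m"
begin

abbreviation "n \<equiv> (2::nat) ^ k"
definition "B = 2 * n"
definition "W = B ^ Suc m"
definition "D = 2 * n * W"
definition "RS = {rs. set rs \<subseteq> {..<n} \<and> length rs = m}"
definition "L = {..<n} \<times> RS"
definition ans :: "(nat \<Rightarrow> bool) \<Rightarrow> nat \<Rightarrow> nat" where "ans x r = r + n * of_bool (x r)"
definition ys :: "(nat \<Rightarrow> bool) \<Rightarrow> nat \<Rightarrow> nat list \<Rightarrow> nat list" where
  "ys x j rs = map (\<lambda>q. if q < j then ans x (rs ! q) else rs ! q) [0..<m]"
definition pos :: "(nat \<Rightarrow> bool) \<Rightarrow> nat \<Rightarrow> nat \<times> nat list \<Rightarrow> nat" where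
  "pos x j = (\<lambda>(t, rs). if j < m then basis_idx W (rs ! j) False (enc B (t # ys x j rs))
                         else basis_idx W t False (enc B (0 # ys x j rs)))"

lemma n_pos: "0 < n" by simp
lemma B_pos: "0 < B" by (simp add: B_def)
lemma W_pos: "0 < W" by (simp add: W_def B_def)

lemma finite_RS: "finite RS" unfolding RS_def by (rule finite_lists_length_eq) simp
lemma finite_L: "finite L" unfolding L_def using finite_RS by simp
lemma card_L: "card L = n ^ Suc m"
  unfolding L_def RS_def by (simp add: card_cartesian_product card_lists_length_eq)

lemma RS_nth: "rs \<in> RS \<Longrightarrow> q < m \<Longrightarrow> rs ! q < n"
  unfolding RS_def by (auto dest!: nth_mem)
lemma RS_len: "rs \<in> RS \<Longrightarrow> length rs = m" unfolding RS_def by simp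

lemma ans_lt: "r < n \<Longrightarrow> ans x r < B" unfolding ans_def B_def by (cases "x r") auto

lemma ans_eq: "r < n \<Longrightarrow> r' < n \<Longrightarrow> ans x r = ans y r' \<longleftrightarrow> r = r' \<and> x r = y r"
proof
  assume a: "r < n" "r' < n" and e: "ans x r = ans y r'"
  have "ans x r mod n = r" "ans y r' mod n = r'" using a by (simp_all add: ans_def)
  then have "r = r'" using e by simp
  moreover have "ans x r div n = of_bool (x r)" "ans y r' div n = of_bool (y r')" using a by (simp_all add: ans_def)
  ultimately show "r = r' \<and> x r = y r" using e by (cases "x r"; cases "y r"; simp)
qed (auto simp add: ans_def)

lemma ys_len[simp]: "length (ys x j rs) = m" by (simp add: ys_def)
lemma ys_nth: "q < m \<Longrightarrow> ys x j rs ! q = (if q < j then ans x (rs ! q) else rs ! q)"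
  by (simp add: ys_def)

lemma ys_lt: "rs \<in> RS \<Longrightarrow> \<forall>e\<in>set (ys x j rs). e < B"
proof
  fix e assume rs: "rs \<in> RS" and "e \<in> set (ys x j rs)"
  then obtain q where q: "q < m" "e = ys x j rs ! q" by (auto simp: in_set_conv_nth)
  then show "e < B" using RS_nth[OF rs q(1)] ans_lt by (auto simp: ys_nth B_def)
qed

lemma enc_ys_lt: "rs \<in> RS \<Longrightarrow> t < n \<Longrightarrow> enc B (t # ys x j rs) < W"
proof -
  assume "rs \<in> RS" "t < n"
  then have "\<forall>e\<in>set (t # ys x j rs). e < B" using ys_lt by (auto simp: B_def)
  from enc_bound[OF this] show ?thesis by (simp add: W_def)
qed

lemma ys_eq: "rs \<in> RS \<Longrightarrow> rs' \<in> RS \<Longrightarrow>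
    ys x j rs = ys y j rs' \<longleftrightarrow> rs = rs' \<and> (\<forall>q<min j m. x (rs ! q) = y (rs ! q))"
proof
  assume rs: "rs \<in> RS" "rs' \<in> RS" and e: "ys x j rs = ys y j rs'"
  have *: "rs ! q = rs' ! q \<and> (q < j \<longrightarrow> x (rs ! q) = y (rs ! q))" if q: "q < m" for q
  proof -
    have e2: "ys x j rs ! q = ys y j rs' ! q" by (simp only: e)
    show ?thesis
    proof (cases "q < j")
      case True
      then have "ans x (rs ! q) = ans y (rs' ! q)" using e2 q by (simp add: ys_nth)
      then have "rs ! q = rs' ! q \<and> x (rs ! q) = y (rs ! q)"
        by (rule iffD1[OF ans_eq[OF RS_nth[OF rs(1) q] RS_nth[OF rs(2) q]]])
      then show ?thesis by blast
    next
      case False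
      then show ?thesis using e2 q by (simp add: ys_nth)
    qed
  qed
  have "rs = rs'"
  proof (rule nth_equalityI)
    show "length rs = length rs'" using RS_len[OF rs(1)] RS_len[OF rs(2)] by simp
    fix q assume "q < length rs"
    then show "rs ! q = rs' ! q" using * RS_len[OF rs(1)] by blast
  qed
  moreover have "\<forall>q<min j m. x (rs ! q) = y (rs ! q)"
  proof (intro allI impI)
    fix q assume "q < min j m"
    then have q: "q < m" "q < j" by auto
    from *[OF q(1)] q(2) show "x (rs ! q) = y (rs ! q)" by blast
  qed
  ultimately show "rs = rs' \<and> (\<forall>q<min j m. x (rs ! q) = y (rs ! q))" by blast
next
  assume h: "rs = rs' \<and> (\<forall>q<min j m. x (rs ! q) = y (rs ! q))"
  show "ys x j rs = ys y j rs'" unfolding ys_def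
  proof (rule map_cong[OF refl])
    fix q assume "q \<in> set [0..<m]"
    then have "q < m" by simp
    then show "(if q < j then ans x (rs ! q) else rs ! q) = (if q < j then ans y (rs' ! q) else rs' ! q)"
      using h by (cases "q < j") (auto simp: ans_def)
  qed
qed

lemma pos_bound: "l \<in> L \<Longrightarrow> pos x j l < D"
proof -
  assume "l \<in> L"
  then obtain t rs where l: "l = (t, rs)" "t < n" "rs \<in> RS" by (auto simp: L_def)
  show ?thesis
  proof (cases "j < m")
    case True
    then show ?thesis using l basis_idx_bound[OF RS_nth[OF l(3) True] enc_ys_lt[OF l(3) l(2)]]
      by (simp add: pos_def D_def)
  next
    case False
    then show ?thesis using l basis_idx_bound[OF l(2) enc_ys_lt[OF l(3), of 0]]
      by (simp add: pos_def D_def)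
  qed
qed

lemma enc_cons_inj:
  assumes "a < n" "a' < n" "rs \<in> RS" "rs' \<in> RS" "enc B (a # ys x j rs) = enc B (a' # ys y j rs')"
  shows "a = a' \<and> ys x j rs = ys y j rs'"
proof -
  have "a # ys x j rs = a' # ys y j rs'"
  proof (rule enc_inj[OF _ _ _ assms(5)])
    show "\<forall>e\<in>set (a # ys x j rs). e < B" using ys_lt[OF assms(3)] assms(1) by (auto simp: B_def)
    show "\<forall>e\<in>set (a' # ys y j rs'). e < B" using ys_lt[OF assms(4)] assms(2) by (auto simp: B_def)
  qed simp
  then show ?thesis by simp
qed

lemma pos_inj: "inj_on (pos x j) L"
proof (rule inj_onI)
  fix l l' assume l: "l \<in> L" and l': "l' \<in> L" and e: "pos x j l = pos x j l'"
  obtain t rs where tl: "l = (t, rs)" "t < n" "rs \<in> RS" using l by (auto simp: L_def)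
  obtain t' rs' where tl': "l' = (t', rs')" "t' < n" "rs' \<in> RS" using l' by (auto simp: L_def)
  have "t = t' \<and> ys x j rs = ys x j rs'"
  proof (cases "j < m")
    case True
    have "basis_idx W (rs ! j) False (enc B (t # ys x j rs)) = basis_idx W (rs' ! j) False (enc B (t' # ys x j rs'))"
      using e True unfolding tl(1) tl'(1) pos_def by simp
    from basis_idx_inj[OF enc_ys_lt[OF tl(3) tl(2)] enc_ys_lt[OF tl'(3) tl'(2)] this]
    have "enc B (t # ys x j rs) = enc B (t' # ys x j rs')" by blast
    then show ?thesis using enc_cons_inj[OF tl(2) tl'(2) tl(3) tl'(3)] by blast
  next
    case False
    have "basis_idx W t False (enc B (0 # ys x j rs)) = basis_idx W t' False (enc B (0 # ys x j rs'))"
      using e False unfolding tl(1) tl'(1) pos_def by simp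
    from basis_idx_inj[OF enc_ys_lt[OF tl(3), of 0] enc_ys_lt[OF tl'(3), of 0] this]
    have "t = t'" "enc B (0 # ys x j rs) = enc B (0 # ys x j rs')" by simp_all
    then show ?thesis using enc_cons_inj[OF _ _ tl(3) tl'(3), of 0 0] by simp
  qed
  moreover have "ys x j rs = ys x j rs' \<Longrightarrow> rs = rs'"
    using ys_eq[OF tl(3) tl'(3), of x j x] by blast
  ultimately show "l = l'" using tl(1) tl'(1) by simp
qed

end

context qt begin

definition R :: "nat \<Rightarrow> (nat \<times> bool \<times> nat \<times> nat list) set" where
  "R j = {(i, b, t, zs). t < n \<and> length zs = m \<and> (\<forall>q<m. zs ! q < B) \<and> (\<forall>q. j \<le> q \<and> q < m \<longrightarrow> zs ! q < n) \<and> i = zs ! j}"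

definition pin :: "nat \<times> bool \<times> nat \<times> nat list \<Rightarrow> nat" where
  "pin = (\<lambda>(i, b, t, zs). basis_idx W i b (enc B (t # zs)))"

definition pout :: "nat \<Rightarrow> nat \<times> bool \<times> nat \<times> nat list \<Rightarrow> nat" where
  "pout j = (\<lambda>(i, b, t, zs). if Suc j < m
      then basis_idx W (zs ! Suc j) False (enc B (t # zs[j := i + n * of_bool b]))
      else basis_idx W t False (enc B (0 # zs[j := i + n * of_bool b])))"

lemma enc_lt_W:
  assumes "t < B" "length zs = m" "\<forall>q<m. zs ! q < B"
  shows "enc B (t # zs) < W"
proof -
  have "\<forall>e\<in>set (t # zs). e < B" using assms by (auto simp: in_set_conv_nth)
  from enc_bound[OF this] show ?thesis using assms(2) by (simp add: W_def)
qed

lemma upd_lt: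
  assumes "i < n" "length zs = m" "\<forall>q<m. zs ! q < B"
  shows "\<forall>q<m. zs[j := i + n * of_bool b] ! q < B"
proof (intro allI impI)
  fix q assume q: "q < m"
  show "zs[j := i + n * of_bool b] ! q < B"
  proof (cases "j < m")
    case True
    then show ?thesis using assms q by (cases "j = q") (auto simp: nth_list_update B_def)
  next
    case False
    then show ?thesis using assms q by (simp add: list_update_beyond)
  qed
qed

lemma enc_inj2:
  assumes "t < B" "t' < B" "length zs = m" "length zs' = m" "\<forall>q<m. zs ! q < B" "\<forall>q<m. zs' ! q < B"
    "enc B (t # zs) = enc B (t' # zs')"
  shows "t = t' \<and> zs = zs'"
proof -
  have "t # zs = t' # zs'"
  proof (rule enc_inj[OF _ _ _ assms(7)])
    show "\<forall>e\<in>set (t # zs). e < B" using assms by (auto simp: in_set_conv_nth)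
    show "\<forall>e\<in>set (t' # zs'). e < B" using assms by (auto simp: in_set_conv_nth)
  qed (use assms in simp)
  then show ?thesis by simp
qed

lemma upd_inj:
  assumes "i < n" "i' < n" "length zs = m" "length zs' = m" "j < m" "zs ! j = i" "zs' ! j = i'"
    "zs[j := i + n * of_bool b] = zs'[j := i' + n * of_bool b']"
  shows "i = i' \<and> b = b' \<and> zs = zs'"
proof -
  have "zs[j := i + n * of_bool b] ! j = zs'[j := i' + n * of_bool b'] ! j" using assms(8) by (simp only:)
  then have e: "i + n * of_bool b = i' + n * of_bool b'" using assms(3,4,5) by simp
  have "(i + n * of_bool b) mod n = i" "(i' + n * of_bool b') mod n = i'" using assms(1,2) by simp_all
  then have ii: "i = i'" using e by metis
  then have bb: "b = b'" using e by (cases b; cases b'; simp)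
  have "zs = zs'"
  proof (rule nth_equalityI)
    show "length zs = length zs'" using assms by simp
    fix q assume q: "q < length zs"
    show "zs ! q = zs' ! q"
    proof (cases "q = j")
      case True then show ?thesis using assms ii by simp
    next
      case False
      have "zs[j := i + n * of_bool b] ! q = zs'[j := i' + n * of_bool b'] ! q" using assms(8) by (simp only:)
      then show ?thesis using False by simp
    qed
  qed
  then show ?thesis using ii bb by simp
qed

lemma R_D: "\<rho> \<in> R j \<Longrightarrow> j < m \<Longrightarrow> pin \<rho> < D \<and> pout j \<rho> < D"
proof -
  assume r: "\<rho> \<in> R j" and j: "j < m"
  obtain i b t zs where rho: "\<rho> = (i, b, t, zs)" by (cases \<rho>) auto
  have h: "t < n" "length zs = m" "\<forall>q<m. zs ! q < B" "\<forall>q. j \<le> q \<and> q < m \<longrightarrow> zs ! q < n" "i = zs ! j"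
    using r rho by (auto simp: R_def)
  have i: "i < n" using h j by auto
  have tB: "t < B" "0 < B" using h(1) by (auto simp: B_def)
  have u: "\<forall>q<m. zs[j := i + n * of_bool b] ! q < B" using upd_lt[OF i h(2,3)] .
  have l: "length (zs[j := i + n * of_bool b]) = m" using h by simp
  have "pin \<rho> < D" unfolding rho pin_def D_def using basis_idx_bound[OF i enc_lt_W[OF tB(1) h(2,3)]] by simp
  moreover have "pout j \<rho> < D"
  proof (cases "Suc j < m")
    case True
    then have "zs ! Suc j < n" using h by auto
    then show ?thesis unfolding rho pout_def D_def using True basis_idx_bound[OF _ enc_lt_W[OF tB(1) l u]] by simp
  next
    case False
    then show ?thesis unfolding rho pout_def D_def using basis_idx_bound[OF h(1) enc_lt_W[OF tB(2) l u]] by simp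
  qed
  ultimately show ?thesis by simp
qed

lemma pin_inj: "inj_on pin (R j)"
proof (rule inj_onI)
  fix r r' assume r: "r \<in> R j" and r': "r' \<in> R j" and e: "pin r = pin r'"
  obtain i b t zs where rho: "r = (i, b, t, zs)" by (cases r) auto
  obtain i' b' t' zs' where rho': "r' = (i', b', t', zs')" by (cases r') auto
  have h: "t < n" "length zs = m" "\<forall>q<m. zs ! q < B"
    using r rho by (auto simp: R_def)
  have h': "t' < n" "length zs' = m" "\<forall>q<m. zs' ! q < B"
    using r' rho' by (auto simp: R_def)
  have tB: "t < B" "t' < B" using h h' by (auto simp: B_def)
  have "basis_idx W i b (enc B (t # zs)) = basis_idx W i' b' (enc B (t' # zs'))" using e rho rho' by (simp add: pin_def)
  from basis_idx_inj[OF enc_lt_W[OF tB(1) h(2,3)] enc_lt_W[OF tB(2) h'(2,3)] this]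
  have "i = i'" "b = b'" "enc B (t # zs) = enc B (t' # zs')" by simp_all
  with enc_inj2[OF tB h(2) h'(2) h(3) h'(3)] show "r = r'" using rho rho' by simp
qed

lemma pout_inj: "j < m \<Longrightarrow> inj_on (pout j) (R j)"
proof (rule inj_onI)
  fix r r' assume j: "j < m" and r: "r \<in> R j" and r': "r' \<in> R j" and e: "pout j r = pout j r'"
  obtain i b t zs where rho: "r = (i, b, t, zs)" by (cases r) auto
  obtain i' b' t' zs' where rho': "r' = (i', b', t', zs')" by (cases r') auto
  have h: "t < n" "length zs = m" "\<forall>q<m. zs ! q < B" "\<forall>q. j \<le> q \<and> q < m \<longrightarrow> zs ! q < n" "i = zs ! j"
    using r rho by (auto simp: R_def)
  have h': "t' < n" "length zs' = m" "\<forall>q<m. zs' ! q < B" "\<forall>q. j \<le> q \<and> q < m \<longrightarrow> zs' ! q < n" "i' = zs' ! j"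
    using r' rho' by (auto simp: R_def)
  have i: "i < n" "i' < n" using h h' j by auto
  have tB: "t < B" "t' < B" "0 < B" using h h' by (auto simp: B_def)
  define u where "u = zs[j := i + n * of_bool b]"
  define u' where "u' = zs'[j := i' + n * of_bool b']"
  have uu: "\<forall>q<m. u ! q < B" "\<forall>q<m. u' ! q < B" "length u = m" "length u' = m"
    using upd_lt[OF i(1) h(2,3)] upd_lt[OF i(2) h'(2,3)] h h' by (simp_all add: u_def u'_def)
  have "t = t' \<and> u = u'"
  proof (cases "Suc j < m")
    case True
    have "basis_idx W (zs ! Suc j) False (enc B (t # u)) = basis_idx W (zs' ! Suc j) False (enc B (t' # u'))"
      using e True rho rho' by (simp add: pout_def u_def u'_def)
    from basis_idx_inj[OF enc_lt_W[OF tB(1) uu(3,1)] enc_lt_W[OF tB(2) uu(4,2)] this]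
    have "enc B (t # u) = enc B (t' # u')" by simp
    then show ?thesis using enc_inj2[OF tB(1,2) uu(3,4,1,2)] by simp
  next
    case False
    have "basis_idx W t False (enc B (0 # u)) = basis_idx W t' False (enc B (0 # u'))"
      using e False rho rho' by (simp add: pout_def u_def u'_def)
    from basis_idx_inj[OF enc_lt_W[OF tB(3) uu(3,1)] enc_lt_W[OF tB(3) uu(4,2)] this]
    have "t = t'" "enc B (0 # u) = enc B (0 # u')" by simp_all
    then show ?thesis using enc_inj2[OF tB(3,3) uu(3,4,1,2)] by simp
  qed
  then have uu': "zs[j := i + n * of_bool b] = zs'[j := i' + n * of_bool b']" by (simp add: u_def u'_def)
  then have "i = i' \<and> b = b' \<and> zs = zs'" by (rule upd_inj[OF i h(2) h'(2) j h(5)[symmetric] h'(5)[symmetric]])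
  then show "r = r'" using rho rho' \<open>t = t' \<and> u = u'\<close> by simp
qed

definition fchk :: "nat \<Rightarrow> nat \<Rightarrow> nat" where
  "fchk j = (SOME f. bij_betw f {..<D} {..<D} \<and> (\<forall>\<rho>\<in>R j. f (pin \<rho>) = pout j \<rho>))"

lemma fchk_spec:
  assumes j: "j < m"
  shows "bij_betw (fchk j) {..<D} {..<D} \<and> (\<forall>\<rho>\<in>R j. fchk j (pin \<rho>) = pout j \<rho>)"
proof -
  have "\<exists>f. bij_betw f {..<D} {..<D} \<and> (\<forall>\<rho>\<in>R j. f (pin \<rho>) = pout j \<rho>)"
    by (rule extend_bij[OF pin_inj pout_inj[OF j]]) (use R_D j in auto)
  then show ?thesis unfolding fchk_def by (rule someI_ex)
qed

definition Ucheck :: "nat \<Rightarrow> cmatrix" where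
  "Ucheck j = pmat (fchk j) (\<lambda>_. 1)"

lemma unitary_Ucheck: "j < m \<Longrightarrow> unitary_mat D (Ucheck j)"
  unfolding Ucheck_def by (rule unitary_pmat) (use fchk_spec in auto)

lemma rec_in_R:
  assumes "j < m" "(t, rs) \<in> L"
  shows "(rs ! j, x (rs ! j), t, ys x j rs) \<in> R j"
proof -
  have t: "t < n" and rs: "rs \<in> RS" using assms by (auto simp: L_def)
  have "\<forall>q<m. ys x j rs ! q < B"
  proof (intro allI impI)
    fix q assume "q < m"
    then have "ys x j rs ! q \<in> set (ys x j rs)" by simp
    then show "ys x j rs ! q < B" using ys_lt[OF rs] by blast
  qed
  moreover have "\<forall>q. j \<le> q \<and> q < m \<longrightarrow> ys x j rs ! q < n" using RS_nth[OF rs] by (auto simp: ys_nth)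
  moreover have "rs ! j = ys x j rs ! j" using assms(1) by (simp add: ys_nth)
  ultimately show ?thesis using t by (simp add: R_def)
qed

lemma oracle_pos:
  assumes "j < m" "(t, rs) \<in> L"
  shows "oracle_target W x (pos x j (t, rs)) = pin (rs ! j, x (rs ! j), t, ys x j rs)"
proof -
  have t: "t < n" and rs: "rs \<in> RS" using assms by (auto simp: L_def)
  show ?thesis using assms(1) oracle_target_idx[OF enc_ys_lt[OF rs t]]
    by (simp add: pos_def pin_def)
qed

lemma pout_pos:
  assumes "j < m" "(t, rs) \<in> L"
  shows "pout j (rs ! j, x (rs ! j), t, ys x j rs) = pos x (Suc j) (t, rs)"
proof -
  have upd: "(ys x j rs)[j := rs ! j + n * of_bool (x (rs ! j))] = ys x (Suc j) rs"
    by (rule nth_equalityI) (use assms(1) in \<open>auto simp: ys_nth nth_list_update ans_def\<close>)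
  have nx: "Suc j < m \<Longrightarrow> ys x j rs ! Suc j = rs ! Suc j" by (simp add: ys_nth)
  show ?thesis unfolding pout_def pos_def using upd nx by simp
qed

lemma step_check:
  assumes "j < m"
  shows "mat_app D (Ucheck j) (mat_app D (oracle_mat W x) (sv L a (pos x j))) = sv L a (pos x (Suc j))"
proof -
  have b1: "\<And>l. l \<in> L \<Longrightarrow> pos x j l < D" by (rule pos_bound)
  have b2: "oracle_target W x (pos x j l) < D" if l: "l \<in> L" for l
  proof -
    obtain t rs where tr: "l = (t, rs)" by (cases l) auto
    show ?thesis using oracle_pos[OF assms l[unfolded tr]] R_D[OF rec_in_R[OF assms l[unfolded tr]] assms] tr by simp
  qed
  have b3: "\<And>l. l \<in> L \<Longrightarrow> fchk j (oracle_target W x (pos x j l)) < D"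
    using b2 fchk_spec[OF assms] by (auto simp: bij_betw_def)
  have "mat_app D (Ucheck j) (mat_app D (oracle_mat W x) (sv L a (pos x j)))
      = sv L (\<lambda>l. 1 * (1 * a l)) (\<lambda>l. fchk j (oracle_target W x (pos x j l)))"
    unfolding oracle_mat_pmat Ucheck_def
    by (simp add: mat_app_pmat_sv[where p="pos x j" and f="oracle_target W x", OF finite_L b1 b2]
        mat_app_pmat_sv[where p="\<lambda>l. oracle_target W x (pos x j l)" and f="fchk j", OF finite_L b2 b3])
  also have "\<dots> = sv L a (pos x (Suc j))"
  proof (rule sv_cong)
    fix l assume l: "l \<in> L"
    obtain t rs where tr: "l = (t, rs)" by (cases l) auto
    show "fchk j (oracle_target W x (pos x j l)) = pos x (Suc j) l"
      using fchk_spec[OF assms] rec_in_R[OF assms l[unfolded tr]] oracle_pos[OF assms l[unfolded tr]]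
        pout_pos[OF assms l[unfolded tr]] tr by auto
  qed simp
  finally show ?thesis .
qed

end

context qt begin

definition "c0 = 1 / sqrt (real n ^ Suc m)"
definition "psi = sv L (\<lambda>_. c0) (pos (\<lambda>_. False) 0)"
definition "U0 = (SOME U. unitary_mat D U \<and> (\<forall>r<D. U r 0 = complex_of_real (psi r)))"

lemma basis_idx_div: "z < W \<Longrightarrow> basis_idx W i b z div W = 2 * i + of_bool b"
  by (simp add: basis_idx_def)

lemma D_pos: "0 < D" using W_pos by (simp add: D_def)

lemma pos0_eq: "pos x 0 l = pos y 0 l"
  by (cases l) (simp add: pos_def ys_def m_pos)

lemma psi_norm: "(\<Sum>r<D. (psi r)^2) = 1"
proof -
  have "(\<Sum>r<D. (psi r)^2) = (\<Sum>l\<in>L. c0^2)"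
    unfolding psi_def
    by (rule sum_sv[OF finite_L pos_inj]) (use pos_bound in auto)
  also have "\<dots> = real (card L) * c0^2" by simp
  also have "\<dots> = 1" unfolding card_L c0_def by (simp add: power_divide)
  finally show ?thesis .
qed

lemma U0_spec: "unitary_mat D U0 \<and> (\<forall>r<D. U0 r 0 = complex_of_real (psi r))"
proof -
  have "\<exists>U. unitary_mat D U \<and> (\<forall>r<D. U r 0 = complex_of_real (psi r))"
    by (rule householder[OF D_pos psi_norm])
  then show ?thesis unfolding U0_def by (rule someI_ex)
qed

lemma init_state:
  "mat_app D U0 (\<lambda>r. if r = 0 then 1 else 0) = sv L (\<lambda>_. complex_of_real c0) (pos x 0)"
proof (rule ext)
  fix r
  show "mat_app D U0 (\<lambda>r. if r = 0 then 1 else 0) r = sv L (\<lambda>_. complex_of_real c0) (pos x 0) r"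
  proof (cases "r < D")
    case True
    have "(\<Sum>c<D. U0 r c * (if c = 0 then 1 else 0)) = (\<Sum>c<D. if c = 0 then U0 r c else 0)"
      by (rule sum.cong) auto
    then have "mat_app D U0 (\<lambda>r. if r = 0 then 1 else 0) r = U0 r 0"
      using True D_pos by (simp add: mat_app_def)
    also have "\<dots> = complex_of_real (psi r)" using U0_spec True by blast
    also have "\<dots> = sv L (\<lambda>_. complex_of_real c0) (pos (\<lambda>_. False) 0) r"
      unfolding psi_def sv_def of_real_sum by (rule sum.cong) auto
    also have "\<dots> = sv L (\<lambda>_. complex_of_real c0) (pos x 0) r"
      by (rule arg_cong[where f="\<lambda>f. f r"], rule sv_cong) (auto intro: pos0_eq)
    finally show ?thesis .
  next
    case False
    then have "r \<notin> pos x 0 ` L" using pos_bound by force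
    then show ?thesis using False by (simp add: mat_app_def sv_out)
  qed
qed

definition "Uph = pmat id (\<lambda>c. if odd (c div W) then -1 else 1)"

lemma unitary_Uph: "unitary_mat D Uph"
  unfolding Uph_def by (rule unitary_pmat) auto

definition sg :: "(nat \<Rightarrow> bool) \<Rightarrow> nat \<times> nat list \<Rightarrow> complex" where
  "sg x = (\<lambda>(t, rs). if x t then -1 else 1)"

lemma oracle_pos_m:
  assumes "(t, rs) \<in> L"
  shows "oracle_target W x (pos x m (t, rs)) = basis_idx W t (x t) (enc B (0 # ys x m rs))"
    "enc B (0 # ys x m rs) < W"
proof -
  have rs: "rs \<in> RS" using assms by (auto simp: L_def)
  show "enc B (0 # ys x m rs) < W" using enc_ys_lt[OF rs, of 0] by simp
  then show "oracle_target W x (pos x m (t, rs)) = basis_idx W t (x t) (enc B (0 # ys x m rs))"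
    using oracle_target_idx by (simp add: pos_def)
qed

lemma step_phase:
  "mat_app D (oracle_mat W x) (mat_app D Uph (mat_app D (oracle_mat W x) (sv L a (pos x m))))
   = sv L (\<lambda>l. sg x l * a l) (pos x m)"
proof -
  have b1: "\<And>l. l \<in> L \<Longrightarrow> pos x m l < D" by (rule pos_bound)
  have b2: "oracle_target W x (pos x m l) < D" if l: "l \<in> L" for l
  proof -
    obtain t rs where tr: "l = (t, rs)" by (cases l) auto
    have "t < n" using l tr by (auto simp: L_def)
    then show ?thesis using oracle_pos_m[OF l[unfolded tr]] tr basis_idx_bound unfolding D_def by simp
  qed
  have oo: "oracle_target W x (oracle_target W x (pos x m l)) = pos x m l" if l: "l \<in> L" for l
  proof -
    obtain t rs where tr: "l = (t, rs)" by (cases l) auto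
    show ?thesis using oracle_pos_m[OF l[unfolded tr]] oracle_target_idx tr by (simp add: pos_def)
  qed
  have b3: "\<And>l. l \<in> L \<Longrightarrow> id (oracle_target W x (pos x m l)) < D" using b2 by simp
  have b4: "\<And>l. l \<in> L \<Longrightarrow> oracle_target W x (oracle_target W x (pos x m l)) < D" using oo b1 by simp
  have sgn: "(if odd (oracle_target W x (pos x m l) div W) then -1 else 1) = sg x l" if l: "l \<in> L" for l
  proof -
    obtain t rs where tr: "l = (t, rs)" by (cases l) auto
    have "basis_idx W t (x t) (enc B (0 # ys x m rs)) div W = 2 * t + of_bool (x t)"
      by (rule basis_idx_div[OF oracle_pos_m(2)[OF l[unfolded tr]]])
    then show ?thesis using oracle_pos_m(1)[OF l[unfolded tr]] tr by (cases "x t") (auto simp: sg_def)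
  qed
  have "mat_app D (oracle_mat W x) (mat_app D Uph (mat_app D (oracle_mat W x) (sv L a (pos x m))))
      = sv L (\<lambda>l. 1 * ((if odd (oracle_target W x (pos x m l) div W) then -1 else 1) * (1 * a l)))
          (\<lambda>l. oracle_target W x (id (oracle_target W x (pos x m l))))"
    unfolding oracle_mat_pmat Uph_def
    by (simp add: mat_app_pmat_sv[where p="pos x m" and f="oracle_target W x", OF finite_L b1 b2]
        mat_app_pmat_sv[where p="\<lambda>l. oracle_target W x (pos x m l)" and f="id", OF finite_L b2 b3]
        mat_app_pmat_sv[where p="\<lambda>l. oracle_target W x (pos x m l)" and f="oracle_target W x", OF finite_L b2 b4])
  also have "\<dots> = sv L (\<lambda>l. sg x l * a l) (pos x m)"
    by (rule sv_cong) (simp_all add: sgn oo)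
  finally show ?thesis .
qed

end

lemma chi_sym: "chi k s t = chi k t s" by (simp add: chi_def ip2_sym[of k s t])

context qt begin

definition Hc :: cmatrix where "Hc = (\<lambda>s t. complex_of_real (chi k s t / sqrt n))"
definition "K = kron (2 * W) Hc"
definition "Us = map Ucheck [0..<m] @ [Uph, K]"
definition Acc :: "nat set \<Rightarrow> nat set" where
  "Acc A = (\<lambda>(s, rs). pos (hadamard k s) m (s, rs)) ` (A \<times> RS)"
definition sgr :: "(nat \<Rightarrow> bool) \<Rightarrow> nat \<Rightarrow> real" where "sgr x t = (if x t then -1 else 1)"
definition F :: "(nat \<Rightarrow> bool) \<Rightarrow> nat \<Rightarrow> real" where "F x s = (\<Sum>t<n. sgr x t * chi k s t)"

lemma unitary_Hc: "unitary_mat n Hc"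
  unfolding unitary_mat_def
proof (intro allI impI)
  fix r c assume r: "r < n" and c: "c < n"
  have rr: "sqrt (real n) * sqrt (real n) = real n" by (rule real_sqrt_mult_self[THEN trans]) simp
  have sq: "a / sqrt (real n) * (b / sqrt (real n)) = a * b / real n" for a b
  proof -
    have "a / sqrt (real n) * (b / sqrt (real n)) = a * b / (sqrt (real n) * sqrt (real n))" by simp
    then show ?thesis by (simp only: rr)
  qed
  have t: "cnj (Hc s r) * Hc s c = complex_of_real (chi k r s * chi k c s / real n)" for s
    unfolding Hc_def by (simp only: complex_cnj_complex_of_real of_real_mult[symmetric] sq chi_sym[of k s r] chi_sym[of k s c])
  have "(\<Sum>s<n. cnj (Hc s r) * Hc s c) = complex_of_real ((\<Sum>s<n. chi k r s * chi k c s) / real n)"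
    unfolding t by (simp add: of_real_sum[symmetric] sum_divide_distrib)
  also have "\<dots> = (if r = c then 1 else 0)" using char_orth[OF r c] by simp
  finally show "(\<Sum>s<n. cnj (Hc s r) * Hc s c) = (if r = c then 1 else 0)" .
qed

lemma unitary_K: "unitary_mat D K"
proof -
  have "D = n * (2 * W)" by (simp add: D_def)
  then show ?thesis unfolding K_def using unitary_kron[OF unitary_Hc] W_pos by simp
qed

lemma unitary_Us: "\<forall>U\<in>set Us. unitary_mat D U"
  unfolding Us_def using unitary_Ucheck unitary_Uph unitary_K by auto

lemma length_Us: "length Us = m + 2" by (simp add: Us_def)

lemma fold_checks:
  "j \<le> m \<Longrightarrow> foldl (\<lambda>v U. mat_app D U (mat_app D (oracle_mat W x) v)) (sv L a (pos x 0)) (map Ucheck [0..<j])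
     = sv L a (pos x j)"
proof (induction j)
  case 0 then show ?case by simp
next
  case (Suc j)
  then show ?case by (simp add: step_check)
qed

lemma final_eq: "final_state n W x U0 Us = mat_app D K (sv L (\<lambda>l. sg x l * complex_of_real c0) (pos x m))"
proof -
  have "final_state n W x U0 Us = foldl (\<lambda>v U. mat_app D U (mat_app D (oracle_mat W x) v))
      (mat_app D U0 (\<lambda>r. if r = 0 then 1 else 0)) Us"
    unfolding final_state_def Let_def D_def by simp
  also have "\<dots> = mat_app D K (sv L (\<lambda>l. sg x l * complex_of_real c0) (pos x m))"
    unfolding init_state[of x] Us_def by (simp add: fold_checks step_phase)
  finally show ?thesis .
qed

lemma pos_m: "pos y m (t, rs) = basis_idx W t False (enc B (0 # ys y m rs))"
  by (simp add: pos_def)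

lemma K_at:
  assumes s: "s < n" and rs0: "rs0 \<in> RS" and l: "(t, rs) \<in> L"
  shows "K (pos (hadamard k s) m (s, rs0)) (pos x m (t, rs))
    = (if rs = rs0 \<and> (\<forall>q<m. hadamard k s (rs0 ! q) = x (rs0 ! q)) then Hc s t else 0)"
proof -
  have t: "t < n" and rs: "rs \<in> RS" using l by (auto simp: L_def)
  have z1: "enc B (0 # ys (hadamard k s) m rs0) < W" using enc_ys_lt[OF rs0, of 0] by simp
  have z2: "enc B (0 # ys x m rs) < W" using enc_ys_lt[OF rs, of 0] by simp
  have "(enc B (0 # ys (hadamard k s) m rs0) = enc B (0 # ys x m rs)) = (ys (hadamard k s) m rs0 = ys x m rs)"
    using enc_cons_inj[of 0 0 rs0 rs "hadamard k s" m x] rs0 rs by auto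
  also have "\<dots> = (rs = rs0 \<and> (\<forall>q<m. hadamard k s (rs0 ! q) = x (rs0 ! q)))"
    using ys_eq[OF rs0 rs, of "hadamard k s" m x] by auto
  finally have e: "(enc B (0 # ys (hadamard k s) m rs0) = enc B (0 # ys x m rs)) = (rs = rs0 \<and> (\<forall>q<m. hadamard k s (rs0 ! q) = x (rs0 ! q)))" .
  show ?thesis unfolding pos_m K_def kron_def basis_idx_False_div_mod[OF z1] basis_idx_False_div_mod[OF z2]
    using e by simp
qed

lemma sg_eq: "sg x (t, rs) = complex_of_real (sgr x t)" by (simp add: sg_def sgr_def)

lemma final_at:
  assumes s: "s < n" and rs0: "rs0 \<in> RS"
  shows "final_state n W x U0 Us (pos (hadamard k s) m (s, rs0))
    = (if (\<forall>q<m. hadamard k s (rs0 ! q) = x (rs0 ! q)) then complex_of_real (c0 * F x s / sqrt n) else 0)"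
    (is "_ = (if ?P then _ else _)")
proof -
  have sl: "(s, rs0) \<in> L" using s rs0 by (simp add: L_def)
  have rD: "pos (hadamard k s) m (s, rs0) < D" by (rule pos_bound[OF sl])
  have "final_state n W x U0 Us (pos (hadamard k s) m (s, rs0))
     = (\<Sum>l\<in>L. sg x l * complex_of_real c0 * K (pos (hadamard k s) m (s, rs0)) (pos x m l))"
    unfolding final_eq using rD by (simp add: mat_app_sv[OF finite_L pos_bound])
  also have "\<dots> = (\<Sum>(t, rs)\<in>{..<n} \<times> RS. if rs = rs0 then (if ?P then complex_of_real (sgr x t) * complex_of_real c0 * Hc s t else 0) else 0)"
    unfolding L_def by (rule sum.cong) (auto simp: K_at[OF s rs0] L_def sg_eq)
  also have "\<dots> = (\<Sum>t<n. \<Sum>rs\<in>RS. if rs = rs0 then (if ?P then complex_of_real (sgr x t) * complex_of_real c0 * Hc s t else 0) else 0)"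
    by (simp add: sum.cartesian_product)
  also have "\<dots> = (if ?P then (\<Sum>t<n. complex_of_real (sgr x t) * complex_of_real c0 * Hc s t) else 0)"
    using rs0 finite_RS by (cases ?P) (simp, simp only: if_False if_cancel sum.neutral_const)
  also have "\<dots> = (if ?P then complex_of_real (c0 * F x s / sqrt n) else 0)"
    by (cases ?P) (simp add: F_def Hc_def sum_distrib_left sum_divide_distrib of_real_sum[symmetric] algebra_simps, simp only: if_False)
  finally show ?thesis .
qed

end

context qt begin

definition Ag :: "(nat \<Rightarrow> bool) \<Rightarrow> nat \<Rightarrow> nat set" where
  "Ag x s = {r. r < n \<and> x r = ip2 k s r}"

lemma Acc_inj: "A \<subseteq> {..<n} \<Longrightarrow> inj_on (\<lambda>(s, rs). pos (hadamard k s) m (s, rs)) (A \<times> RS)"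
proof (rule inj_onI)
  fix p p' assume A: "A \<subseteq> {..<n}" and p: "p \<in> A \<times> RS" and p': "p' \<in> A \<times> RS"
    and e: "(\<lambda>(s, rs). pos (hadamard k s) m (s, rs)) p = (\<lambda>(s, rs). pos (hadamard k s) m (s, rs)) p'"
  obtain s rs where sp: "p = (s, rs)" "s \<in> A" "rs \<in> RS" using p by auto
  obtain s' rs' where sp': "p' = (s', rs')" "s' \<in> A" "rs' \<in> RS" using p' by auto
  have e2: "basis_idx W s False (enc B (0 # ys (hadamard k s) m rs)) = basis_idx W s' False (enc B (0 # ys (hadamard k s') m rs'))"
    using e sp sp' by (simp add: pos_m)
  from basis_idx_inj[OF enc_ys_lt[OF sp(3) n_pos] enc_ys_lt[OF sp'(3) n_pos] e2]
  have ss: "s = s'" and ee: "enc B (0 # ys (hadamard k s) m rs) = enc B (0 # ys (hadamard k s') m rs')" by blast+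
  have "ys (hadamard k s) m rs = ys (hadamard k s) m rs'"
    using enc_cons_inj[OF n_pos n_pos sp(3) sp'(3) ee[unfolded ss[symmetric]]] by blast
  then have "rs = rs'" using ys_eq[OF sp(3) sp'(3)] by blast
  then show "p = p'" using sp sp' ss by simp
qed

lemma card_agree: "card {rs \<in> RS. \<forall>q<m. hadamard k s (rs ! q) = x (rs ! q)} = card (Ag x s) ^ m"
proof -
  have "{rs \<in> RS. \<forall>q<m. hadamard k s (rs ! q) = x (rs ! q)} = {xs. set xs \<subseteq> Ag x s \<and> length xs = m}"
  proof (rule set_eqI)
    fix rs :: "nat list"
    have sc: "set rs \<subseteq> S \<longleftrightarrow> (\<forall>q<length rs. rs ! q \<in> S)" for S by (auto simp: in_set_conv_nth dest: nth_mem)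
    show "rs \<in> {rs \<in> RS. \<forall>q<m. hadamard k s (rs ! q) = x (rs ! q)} \<longleftrightarrow> rs \<in> {xs. set xs \<subseteq> Ag x s \<and> length xs = m}"
      unfolding RS_def Ag_def hadamard_def mem_Collect_eq sc by auto
  qed
  then show ?thesis by (simp add: card_lists_length_eq Ag_def)
qed

lemma accept_formula:
  assumes A: "A \<subseteq> {..<n}"
  shows "accept_prob n W x U0 Us (Acc A) = (\<Sum>s\<in>A. real (card (Ag x s)) ^ m * (F x s)^2 / (real n ^ Suc m * real n))"
proof -
  have fA: "finite A" using A finite_subset by blast
  have c0sq: "c0^2 = 1 / real n ^ Suc m" unfolding c0_def by (simp add: power_divide)
  have sq: "(sqrt (real n))^2 = real n" by simp
  have "accept_prob n W x U0 Us (Acc A) = (\<Sum>p\<in>A \<times> RS. (cmod (final_state n W x U0 Us ((\<lambda>(s, rs). pos (hadamard k s) m (s, rs)) p)))^2)"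
    unfolding accept_prob_def Acc_def by (rule sum.reindex[OF Acc_inj[OF A], unfolded comp_def])
  also have "\<dots> = (\<Sum>(s, rs)\<in>A \<times> RS. if (\<forall>q<m. hadamard k s (rs ! q) = x (rs ! q)) then (c0 * F x s / sqrt n)^2 else 0)"
  proof (rule sum.cong[OF refl])
    fix p assume p: "p \<in> A \<times> RS"
    obtain s rs where sp: "p = (s, rs)" "s \<in> A" "rs \<in> RS" using p by auto
    have sn: "s < n" using sp A by auto
    have "(cmod (final_state n W x U0 Us (pos (hadamard k s) m (s, rs))))^2
      = (if (\<forall>q<m. hadamard k s (rs ! q) = x (rs ! q)) then (c0 * F x s / sqrt n)^2 else 0)"
    proof (cases "\<forall>q<m. hadamard k s (rs ! q) = x (rs ! q)")
      case True
      show ?thesis unfolding final_at[OF sn sp(3), of x] if_P[OF True] by (simp only: norm_of_real power2_abs)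
    next
      case False
      show ?thesis unfolding final_at[OF sn sp(3), of x] if_not_P[OF False] by simp
    qed
    then show "(cmod (final_state n W x U0 Us ((\<lambda>(s, rs). pos (hadamard k s) m (s, rs)) p)))^2
      = (case p of (s, rs) \<Rightarrow> if (\<forall>q<m. hadamard k s (rs ! q) = x (rs ! q)) then (c0 * F x s / sqrt n)^2 else 0)"
      using sp(1) by simp
  qed
  also have "\<dots> = (\<Sum>s\<in>A. \<Sum>rs\<in>RS. if (\<forall>q<m. hadamard k s (rs ! q) = x (rs ! q)) then (c0 * F x s / sqrt n)^2 else 0)"
    by (simp add: sum.cartesian_product)
  also have "\<dots> = (\<Sum>s\<in>A. real (card {rs \<in> RS. \<forall>q<m. hadamard k s (rs ! q) = x (rs ! q)}) * (c0 * F x s / sqrt n)^2)"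
    by (rule sum.cong[OF refl]) (simp add: sum.inter_filter[OF finite_RS, symmetric])
  also have "\<dots> = (\<Sum>s\<in>A. real (card (Ag x s)) ^ m * (F x s)^2 / (real n ^ Suc m * real n))"
    by (rule sum.cong[OF refl]) (simp add: card_agree power_mult_distrib power_divide c0sq)
  finally show ?thesis .
qed

lemma parseval: "(\<Sum>s<n. (F x s)^2) = real n ^ 2"
proof -
  have "(\<Sum>s<n. (F x s)^2) = (\<Sum>s<n. \<Sum>t<n. \<Sum>t'<n. sgr x t * sgr x t' * (chi k t s * chi k t' s))"
  proof -
    have tm: "(sgr x t * chi k s t) * (sgr x t' * chi k s t') = sgr x t * sgr x t' * (chi k t s * chi k t' s)" for s t t'
      by (subst chi_sym[of k s t], subst chi_sym[of k s t']) (simp add: mult_ac)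
    show ?thesis unfolding F_def power2_eq_square sum_product by (intro sum.cong refl) (rule tm)
  qed
  also have "\<dots> = (\<Sum>t<n. \<Sum>s<n. \<Sum>t'<n. sgr x t * sgr x t' * (chi k t s * chi k t' s))"
    by (rule sum.swap)
  also have "\<dots> = (\<Sum>t<n. \<Sum>t'<n. \<Sum>s<n. sgr x t * sgr x t' * (chi k t s * chi k t' s))"
    by (rule sum.cong[OF refl], rule sum.swap)
  also have "\<dots> = (\<Sum>t<n. \<Sum>t'<n. sgr x t * sgr x t' * (\<Sum>s<n. chi k t s * chi k t' s))"
    by (simp only: sum_distrib_left)
  also have "\<dots> = (\<Sum>t<n. \<Sum>t'<n. if t = t' then sgr x t * sgr x t' * real n else 0)"
    by (rule sum.cong[OF refl], rule sum.cong[OF refl]) (simp add: char_orth)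
  also have "\<dots> = (\<Sum>t<n. real n)"
    by (rule sum.cong[OF refl]) (simp add: sgr_def)
  also have "\<dots> = real n ^ 2" by (simp add: power2_eq_square)
  finally show ?thesis .
qed

lemma exp_bound: "0 < \<epsilon> \<Longrightarrow> \<epsilon> < 1 \<Longrightarrow> 2 \<le> \<epsilon> * real m \<Longrightarrow> (1 - \<epsilon>) ^ m \<le> 1 / 3"
proof -
  assume e: "0 < \<epsilon>" "\<epsilon> < 1" "2 \<le> \<epsilon> * real m"
  have "(1 - \<epsilon>) ^ m \<le> exp (- \<epsilon>) ^ m"
    using e exp_ge_add_one_self[of "- \<epsilon>"] by (intro power_mono) auto
  also have "\<dots> = exp (- (\<epsilon> * real m))" by (simp add: exp_of_nat_mult[symmetric] mult.commute)
  also have "\<dots> \<le> exp (- 2)" using e by simp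
  also have "\<dots> = 1 / exp 2" by (simp add: exp_minus inverse_eq_divide)
  also have "\<dots> \<le> 1 / 3" using exp_ge_add_one_self[of 2] by (intro divide_left_mono) auto
  finally show ?thesis .
qed

lemma soundness:
  assumes A: "A \<subseteq> {..<n}" and e: "0 < \<epsilon>" "\<epsilon> < 1" "2 \<le> \<epsilon> * real m"
    and far: "eps_far n \<epsilon> (P_A k A) x"
  shows "accept_prob n W x U0 Us (Acc A) \<le> 1 / 3"
proof -
  have fA: "finite A" using A finite_subset by blast
  have nn: "real n > 0" by simp
  have ag: "real (card (Ag x s)) \<le> (1 - \<epsilon>) * real n" if s: "s \<in> A" for s
  proof -
    have "hadamard k s \<in> P_A k A" using s by (auto simp: P_A_def)
    then have "real (hdist n x (hadamard k s)) > \<epsilon> * real n" using far by (auto simp: eps_far_def)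
    moreover have "card (Ag x s) + hdist n x (hadamard k s) = n"
    proof -
      have "{..<n} = Ag x s \<union> {i. i < n \<and> x i \<noteq> hadamard k s i}" "Ag x s \<inter> {i. i < n \<and> x i \<noteq> hadamard k s i} = {}"
        by (auto simp: Ag_def hadamard_def)
      then show ?thesis unfolding hdist_def
        by (metis card_Un_disjoint card_lessThan finite_Un finite_lessThan)
    qed
    ultimately have r1: "real (card (Ag x s)) + real (hdist n x (hadamard k s)) = real n"
      and r2: "\<epsilon> * real n < real (hdist n x (hadamard k s))"
      by (metis of_nat_add, simp)
    have "(1 - \<epsilon>) * real n = real n - \<epsilon> * real n" by (simp add: algebra_simps)
    then show ?thesis using r1 r2 by linarith
  qed
  have "accept_prob n W x U0 Us (Acc A) = (\<Sum>s\<in>A. real (card (Ag x s)) ^ m * (F x s)^2 / (real n ^ Suc m * real n))"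
    by (rule accept_formula[OF A])
  also have "\<dots> \<le> (\<Sum>s\<in>A. ((1 - \<epsilon>) * real n) ^ m * (F x s)^2 / (real n ^ Suc m * real n))"
    using ag by (intro sum_mono divide_right_mono mult_right_mono power_mono) auto
  also have "\<dots> = (1 - \<epsilon>) ^ m * (\<Sum>s\<in>A. (F x s)^2 / (real n)^2)"
  proof -
    have "((1 - \<epsilon>) * real n) ^ m * (F x s)^2 / (real n ^ Suc m * real n) = (1 - \<epsilon>) ^ m * ((F x s)^2 / (real n)^2)" for s
    proof -
      have "((1 - \<epsilon>) * real n) ^ m * (F x s)^2 / (real n ^ Suc m * real n)
          = ((1 - \<epsilon>) ^ m * (F x s)^2) * real n ^ m / (real n ^ m * (real n)^2)"
        by (simp add: power_mult_distrib power2_eq_square mult_ac)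
      also have "\<dots> = (1 - \<epsilon>) ^ m * ((F x s)^2 / (real n)^2)" using nn by simp
      finally show ?thesis .
    qed
    then show ?thesis by (simp add: sum_distrib_left)
  qed
  also have "\<dots> \<le> (1 - \<epsilon>) ^ m * (\<Sum>s<n. (F x s)^2 / (real n)^2)"
    using A e by (intro mult_left_mono sum_mono2) auto
  also have "(\<Sum>s<n. (F x s)^2 / (real n)^2) = 1"
    using nn by (simp add: sum_divide_distrib[symmetric] parseval)
  also have "(1 - \<epsilon>) ^ m * 1 \<le> 1 / 3" using exp_bound[OF e] by simp
  finally show ?thesis .
qed

lemma completeness:
  assumes A: "A \<subseteq> {..<n}" and x: "x \<in> P_A k A"
  shows "accept_prob n W x U0 Us (Acc A) = 1"
proof -
  obtain y where y: "y \<in> A" "\<forall>i<2^k. x i = hadamard k y i" using x by (auto simp: P_A_def)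
  have yn: "y < n" using y A by auto
  have sg: "sgr x t = chi k y t" if "t < n" for t using y that by (simp add: sgr_def chi_def hadamard_def)
  have Fs: "F x s = (if s = y then real n else 0)" if "s \<in> A" for s
  proof -
    have "F x s = (\<Sum>t<n. chi k y t * chi k s t)" unfolding F_def by (rule sum.cong) (simp_all add: sg)
    also have "\<dots> = (if y = s then real n else 0)" using char_orth[OF yn, of s] that A by auto
    finally show ?thesis by auto
  qed
  have Agy: "Ag x y = {..<n}" using y by (auto simp: Ag_def hadamard_def)
  have "accept_prob n W x U0 Us (Acc A) = (\<Sum>s\<in>A. real (card (Ag x s)) ^ m * (F x s)^2 / (real n ^ Suc m * real n))"
    by (rule accept_formula[OF A])
  also have "\<dots> = (\<Sum>s\<in>A. if s = y then real (card (Ag x y)) ^ m * (real n)^2 / (real n ^ Suc m * real n) else 0)"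
    by (rule sum.cong) (auto simp: Fs)
  also have "\<dots> = real (card (Ag x y)) ^ m * (real n)^2 / (real n ^ Suc m * real n)"
  proof -
    have fA: "finite A" using A finite_subset by blast
    show ?thesis using y(1) fA by (simp only: sum.delta if_True)
  qed
  also have "\<dots> = 1" unfolding Agy by (simp add: power2_eq_square)
  finally show ?thesis .
qed

lemma tester: 
  assumes A: "A \<subseteq> {..<n}" and e: "0 < \<epsilon>" "\<epsilon> < 1" "2 \<le> \<epsilon> * real m"
  shows "one_sided_quantum_tester n (P_A k A) \<epsilon> (m + 2)"
  unfolding one_sided_quantum_tester_def
proof (intro exI conjI)
  show "0 < W" by (rule W_pos)
  show "length Us = m + 2" by (rule length_Us)
  show "unitary_mat (2 * n * W) U0" using U0_spec by (simp add: D_def)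
  show "\<forall>U\<in>set Us. unitary_mat (2 * n * W) U" using unitary_Us by (simp add: D_def)
  show "Acc A \<subseteq> {..<2 * n * W}"
    unfolding Acc_def using A pos_bound by (force simp: L_def D_def)
  show "\<forall>x\<in>P_A k A. accept_prob n W x U0 Us (Acc A) = 1" using completeness[OF A] by blast
  show "\<forall>x. eps_far n \<epsilon> (P_A k A) x \<longrightarrow> accept_prob n W x U0 Us (Acc A) \<le> 1 / 3"
    using soundness[OF A e] by blast
qed

end

lemma unitary_id: "unitary_mat D (\<lambda>r c. if r = c then 1 else 0)"
  unfolding unitary_mat_def
proof (intro allI impI)
  fix r c :: nat assume r: "r < D" and c: "c < D"
  have "(\<Sum>m<D. cnj (if m = r then 1 else 0) * (if m = c then 1 else (0::complex))) = (\<Sum>m<D. if m = r then (if r = c then 1 else 0) else 0)"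
    by (rule sum.cong) auto
  then show "(\<Sum>m<D. cnj (if m = r then 1 else 0) * (if m = c then 1 else (0::complex))) = (if r = c then 1 else 0)"
    using r by simp
qed

lemma trivial_tester:
  assumes A: "A \<subseteq> {..<2^k}" and e: "1 \<le> \<epsilon>"
  shows "one_sided_quantum_tester (2^k) (P_A k A) \<epsilon> 0"
proof -
  define n :: nat where "n = 2^k"
  define U0 :: cmatrix where "U0 = (\<lambda>r c. if r = c then 1 else 0)"
  define Acc where "Acc = (if A = {} then {} else {..<2 * n * 1})"
  have fs: "final_state n 1 x U0 [] = (\<lambda>r. if r < 2 * n then (if r = 0 then 1 else 0) else 0)" for x
  proof (rule ext)
    fix r
    have "(\<Sum>c<2 * n. (if r = c then 1 else 0) * (if c = 0 then 1 else (0::complex))) = (\<Sum>c<2 * n. if c = 0 then (if r = 0 then 1 else 0) else 0)"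
      by (rule sum.cong) auto
    also have "\<dots> = (if r = 0 then 1 else 0)" by (simp add: n_def)
    finally have s: "(\<Sum>c<2 * n. (if r = c then 1 else 0) * (if c = 0 then 1 else (0::complex))) = (if r = 0 then 1 else 0)" .
    show "final_state n 1 x U0 [] r = (if r < 2 * n then (if r = 0 then 1 else 0) else 0)"
      unfolding final_state_def Let_def mat_app_def U0_def using s by simp
  qed
  have "one_sided_quantum_tester n (P_A k A) \<epsilon> 0"
    unfolding one_sided_quantum_tester_def
  proof (intro exI conjI)
    show "(0::nat) < 1" by simp
    show "length ([] :: cmatrix list) = 0" by simp
    show "unitary_mat (2 * n * 1) U0" unfolding U0_def by (rule unitary_id)
    show "\<forall>U\<in>set []. unitary_mat (2 * n * 1) U" by simp
    show "Acc \<subseteq> {..<2 * n * 1}" by (simp add: Acc_def)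
    show "\<forall>x\<in>P_A k A. accept_prob n 1 x U0 [] Acc = 1"
    proof
      fix x assume "x \<in> P_A k A"
      then have "A \<noteq> {}" by (auto simp: P_A_def)
      then have "accept_prob n 1 x U0 [] Acc = (\<Sum>r<2 * n. (cmod (if r = 0 then 1 else 0))^2)"
        unfolding accept_prob_def Acc_def fs by simp
      also have "\<dots> = (\<Sum>r<2 * n. if r = 0 then 1 else 0)" by (rule sum.cong) auto
      also have "\<dots> = 1" by (simp add: n_def)
      finally show "accept_prob n 1 x U0 [] Acc = 1" .
    qed
    show "\<forall>x. eps_far n \<epsilon> (P_A k A) x \<longrightarrow> accept_prob n 1 x U0 [] Acc \<le> 1 / 3"
    proof (intro allI impI)
      fix x assume far: "eps_far n \<epsilon> (P_A k A) x"
      show "accept_prob n 1 x U0 [] Acc \<le> 1 / 3"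
      proof (cases "A = {}")
        case True
        then show ?thesis by (simp add: accept_prob_def Acc_def)
      next
        case False
        then obtain y where y: "y \<in> A" by blast
        then have "hadamard k y \<in> P_A k A" by (auto simp: P_A_def)
        then have "real (hdist n x (hadamard k y)) > \<epsilon> * real n" using far by (auto simp: eps_far_def)
        moreover have "hdist n x (hadamard k y) \<le> n"
          unfolding hdist_def by (rule order_trans[OF card_mono[of "{..<n}"]]) auto
        moreover have "1 * real n \<le> \<epsilon> * real n" using e by (intro mult_right_mono) auto
        ultimately show ?thesis by linarith
      qed
    qed
  qed
  then show ?thesis by (simp add: n_def)
qed

theorem lemma3p2:
  shows "\<exists>c::real. \<forall>(k::nat) (A::nat set) (\<epsilon>::real).
           A \<subseteq> {..<2^k} \<and> \<epsilon> > 0 \<longrightarrow>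
           (\<exists>T::nat. real T \<le> c / \<epsilon> \<and> one_sided_quantum_tester (2^k) (P_A k A) \<epsilon> T)"
proof (rule exI[of _ 5], intro allI impI)
  fix k :: nat and A :: "nat set" and \<epsilon> :: real
  assume h: "A \<subseteq> {..<2^k} \<and> \<epsilon> > 0"
  then have A: "A \<subseteq> {..<2^k}" and e0: "0 < \<epsilon>" by auto
  show "\<exists>T::nat. real T \<le> 5 / \<epsilon> \<and> one_sided_quantum_tester (2^k) (P_A k A) \<epsilon> T"
  proof (cases "1 \<le> \<epsilon>")
    case True
    then show ?thesis using trivial_tester[OF A True] e0 by (intro exI[of _ 0]) simp
  next
    case False
    then have e1: "\<epsilon> < 1" by simp
    define m where "m = nat \<lceil>2 / \<epsilon>\<rceil>"
    have m1: "2 / \<epsilon> \<le> real m" unfolding m_def by linarith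
    have m2: "real m < 2 / \<epsilon> + 1" unfolding m_def
      using e0 by (simp add: of_nat_nat) linarith?
    have "2 / \<epsilon> > 0" using e0 by simp
    then have mpos: "0 < m" using m1 by linarith
    interpret qt k m by standard (rule mpos)
    have em: "2 \<le> \<epsilon> * real m" using m1 e0 by (simp add: field_simps)
    have "real (m + 2) \<le> 5 / \<epsilon>"
    proof -
      have "3 \<le> 3 / \<epsilon>" using e0 e1 by (simp add: field_simps)
      then have "2 / \<epsilon> + 1 + 2 \<le> 5 / \<epsilon>" by (simp add: field_simps)
      then show ?thesis using m2 by simp
    qed
    moreover have "one_sided_quantum_tester (2^k) (P_A k A) \<epsilon> (m + 2)"
      by (rule tester[OF A e0 e1 em])
    ultimately show ?thesis by blast
  qed
qed


end
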